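(* Consider an $N$-player quadratic potential game under the disturbed gradient-based learning dynamics described in the context. For players $i\neq j$, player $i$ is disturbance decoupled from player $j$ if and only if player $j$ is disturbance decoupled from player $i$.
   Context: There are $N$ players, indexed by $[N]$; player $\ell$ has action $x_\ell\in\mathbb{R}^{n_\ell}$, $n=\sum_\ell n_\ell$. A quadratic game has costs $f_\ell(x)=\tfrac12 x_\ell^\top P_\ell x_\ell + x_\ell^\top\big(\sum_{m\neq \ell}P_{\ell m}x_m + r_\ell\big)$ with $P_\ell$ symmetric, $P_{\ell m}\in\mathbb{R}^{n_\ell\times n_m}$, $r_\ell\in\mathbb{R}^{n_\ell}$; it is a quadratic potential game if $P_{\ell m}=P_{m\ell}^\top$ for all $\ell\neq m$. Each player $\ell$ has step size $\gamma_\ell>0$ and updates $x_\ell^{k+1}=x_\ell^k-\gamma_\ell\big(D_\ell f_\ell(x^k)+d_\ell^k\big)$ with $D_\ell f_\ell=\partial f_\ell/\partial x_\ell$ and $d^k_\ell$ an arbitrary additive disturbance. Let $W$ be the block matrix with $W_{\ell\ell}=I-\gamma_\ell P_\ell$, $W_{\ell m}=-\gamma_\ell P_{\ell m}$, $\Gamma=\mathrm{blkdiag}(\gamma_1 I_{n_1},\ldots,\gamma_N I_{n_N})$, $\bar r=(r_1,\ldots,r_N)$. For a player $a$, let $\mathcal{D}_a=\{d\in\mathbb{R}^n : d_m=0\ \forall m\neq a\}$. The uncorrupted and corrupted dynamics (disturbance in player $a$'s gradient) are $x^{k+1}=Wx^k-\Gamma\bar r$ and $y^{k+1}=Wy^k-\Gamma\bar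 r-\Gamma d^k$ with $d^k\in\mathcal{D}_a$. Player $b\neq a$ is disturbance decoupled from player $a$ if for every initial $x^0$, with $y^0=x^0$, one has $y_b^k=x_b^k$ for all $k\ge0$ and all disturbance sequences with $d^k\in\mathcal{D}_a$. *)

theory Defs
  imports "HOL-Analysis.Analysis"
begin

text \<open>Players form a finite type 'p; the coordinates of the joint action x in R^n form a
finite type 'c; pl c is the player owning coordinate c (so x_l = (x c)_{pl c = l}).
The full matrix P :: real^'c^'c collects the blocks: block (l,l) is P_l and block (l,m),
l ~= m, is P_{lm}.\<close>

definition Wmat :: "('c::finite \<Rightarrow> 'p) \<Rightarrow> ('p \<Rightarrow> real) \<Rightarrow> real^'c^'c \<Rightarrow> real^'c^'c" where
  "Wmat pl gam P = (\<chi> c d. (if c = d then 1 else 0) - gam (pl c) * P$c$d)"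

definition Gmat :: "('c::finite \<Rightarrow> 'p) \<Rightarrow> ('p \<Rightarrow> real) \<Rightarrow> real^'c^'c" where
  "Gmat pl gam = (\<chi> c d. if c = d then gam (pl c) else 0)"

primrec traj_x :: "('c::finite \<Rightarrow> 'p) \<Rightarrow> ('p \<Rightarrow> real) \<Rightarrow> real^'c^'c \<Rightarrow> real^'c
    \<Rightarrow> real^'c \<Rightarrow> nat \<Rightarrow> real^'c" where
  "traj_x pl gam P r x0 0 = x0"
| "traj_x pl gam P r x0 (Suc k) =
     Wmat pl gam P *v traj_x pl gam P r x0 k - Gmat pl gam *v r"

primrec traj_y :: "('c::finite \<Rightarrow> 'p) \<Rightarrow> ('p \<Rightarrow> real) \<Rightarrow> real^'c^'c \<Rightarrow> real^'c
    \<Rightarrow> (nat \<Rightarrow> real^'c) \<Rightarrow> real^'c \<Rightarrow> nat \<Rightarrow> real^'c" where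
  "traj_y pl gam P r dst y0 0 = y0"
| "traj_y pl gam P r dst y0 (Suc k) =
     Wmat pl gam P *v traj_y pl gam P r dst y0 k - Gmat pl gam *v r - Gmat pl gam *v dst k"

definition Dset :: "('c::finite \<Rightarrow> 'p) \<Rightarrow> 'p \<Rightarrow> (real^'c) set" where
  "Dset pl a = {d. \<forall>c. pl c \<noteq> a \<longrightarrow> d$c = 0}"

definition dist_decoupled :: "('c::finite \<Rightarrow> 'p) \<Rightarrow> ('p \<Rightarrow> real) \<Rightarrow> real^'c^'c \<Rightarrow> real^'c
    \<Rightarrow> 'p \<Rightarrow> 'p \<Rightarrow> bool" where
  "dist_decoupled pl gam P r b a \<longleftrightarrow>
     (\<forall>x0 dst. (\<forall>k. dst k \<in> Dset pl a) \<longrightarrow>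
        (\<forall>k c. pl c = b \<longrightarrow> traj_y pl gam P r dst x0 k $ c = traj_x pl gam P r x0 k $ c))"

end

theory Submission
  imports Defs
begin

primrec Wp :: "('c::finite \<Rightarrow> 'p) \<Rightarrow> ('p \<Rightarrow> real) \<Rightarrow> real^'c^'c \<Rightarrow> nat \<Rightarrow> real^'c^'c" where
  "Wp pl gam P 0 = mat 1"
| "Wp pl gam P (Suc k) = Wmat pl gam P ** Wp pl gam P k"

lemma Wp_comm: "Wmat pl gam P ** Wp pl gam P k = Wp pl gam P k ** Wmat pl gam P"
  by (induction k) (simp_all add: matrix_mul_assoc)

lemma G_entry: "Gmat pl gam $ c $ d = (if c = d then gam (pl c) else 0)"
  by (simp add: Gmat_def)

lemma mul_G: "(A ** Gmat pl gam) $ c $ d = A $ c $ d * gam (pl d)"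
proof -
  have "(A ** Gmat pl gam) $ c $ d = (\<Sum>k\<in>UNIV. A $ c $ k * (if k = d then gam (pl k) else 0))"
    by (simp add: matrix_matrix_mult_def G_entry)
  also have "\<dots> = (\<Sum>k\<in>UNIV. if k = d then A $ c $ k * gam (pl k) else 0)"
    by (rule sum.cong) auto
  also have "\<dots> = A $ c $ d * gam (pl d)" by simp
  finally show ?thesis .
qed

lemma G_mul: "(Gmat pl gam ** A) $ c $ d = gam (pl c) * A $ c $ d"
proof -
  have "(Gmat pl gam ** A) $ c $ d = (\<Sum>k\<in>UNIV. (if c = k then gam (pl c) else 0) * A $ k $ d)"
    by (simp add: matrix_matrix_mult_def G_entry)
  also have "\<dots> = (\<Sum>k\<in>UNIV. if k = c then gam (pl c) * A $ k $ d else 0)"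
    by (rule sum.cong) auto
  also have "\<dots> = gam (pl c) * A $ c $ d" by simp
  finally show ?thesis .
qed

lemma WG: assumes sym: "\<And>c d. P$c$d = P$d$c"
  shows "Wmat pl gam P ** Gmat pl gam = Gmat pl gam ** transpose (Wmat pl gam P)"
  by (simp add: vec_eq_iff mul_G G_mul transpose_def Wmat_def algebra_simps sym)

lemma transpose_G: "transpose (Gmat pl gam) = Gmat pl gam"
  by (simp add: vec_eq_iff transpose_def Gmat_def)

lemma WpG_comm: assumes sym: "\<And>c d. P$c$d = P$d$c"
  shows "Wp pl gam P k ** Gmat pl gam = Gmat pl gam ** transpose (Wp pl gam P k)"
proof (induction k)
  case 0 then show ?case by simp
next
  case (Suc k)
  have "Wp pl gam P (Suc k) ** Gmat pl gam = Wmat pl gam P ** (Wp pl gam P k ** Gmat pl gam)"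
    by (simp add: matrix_mul_assoc)
  also have "\<dots> = (Wmat pl gam P ** Gmat pl gam) ** transpose (Wp pl gam P k)"
    by (simp add: Suc matrix_mul_assoc)
  also have "\<dots> = Gmat pl gam ** (transpose (Wmat pl gam P) ** transpose (Wp pl gam P k))"
    by (simp add: WG[OF sym] matrix_mul_assoc)
  also have "\<dots> = Gmat pl gam ** transpose (Wp pl gam P k ** Wmat pl gam P)"
    by (simp add: matrix_transpose_mul)
  also have "\<dots> = Gmat pl gam ** transpose (Wp pl gam P (Suc k))"
    by (simp add: Wp_comm)
  finally show ?case .
qed

lemma M_sym: assumes sym: "\<And>c d. P$c$d = P$d$c"
  shows "(Wp pl gam P k ** Gmat pl gam) $ c $ d = (Wp pl gam P k ** Gmat pl gam) $ d $ c"
proof -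
  have "transpose (Wp pl gam P k ** Gmat pl gam) = Wp pl gam P k ** Gmat pl gam"
    by (simp add: matrix_transpose_mul transpose_G WpG_comm[OF sym])
  then show ?thesis by (metis transpose_def vec_lambda_beta)
qed

lemma err_step:
  "traj_y pl gam P r dst x0 (Suc k) - traj_x pl gam P r x0 (Suc k)
   = Wmat pl gam P *v (traj_y pl gam P r dst x0 k - traj_x pl gam P r x0 k) - Gmat pl gam *v dst k"
  by (simp add: matrix_vector_mult_diff_distrib)

lemma mv_neg: "(A::real^'c::finite^'c) *v (- v) = - (A *v v)"
  by (simp add: vec_eq_iff matrix_vector_mult_def sum_negf)

definition Zc where
  "Zc pl gam P b a \<longleftrightarrow> (\<forall>m c d. pl c = b \<longrightarrow> pl d = a \<longrightarrow> (Wp pl gam P m ** Gmat pl gam) $ c $ d = 0)"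

lemma Z_imp:
  assumes Z: "Zc pl gam P b a" and D: "\<forall>k. dst k \<in> Dset pl a" and c: "pl c = b"
  shows "(Wp pl gam P m *v (traj_y pl gam P r dst x0 k - traj_x pl gam P r x0 k)) $ c = 0"
  using c
proof (induction k arbitrary: m c)
  case 0 then show ?case by simp
next
  case (Suc k)
  let ?e = "traj_y pl gam P r dst x0 k - traj_x pl gam P r x0 k"
  have "Wp pl gam P m *v (traj_y pl gam P r dst x0 (Suc k) - traj_x pl gam P r x0 (Suc k))
     = Wp pl gam P (Suc m) *v ?e - (Wp pl gam P m ** Gmat pl gam) *v dst k"
    unfolding err_step
    by (simp only: matrix_vector_mult_diff_distrib matrix_vector_mul_assoc Wp.simps Wp_comm)
  moreover have "(Wp pl gam P (Suc m) *v ?e) $ c = 0" using Suc by blast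
  moreover have "((Wp pl gam P m ** Gmat pl gam) *v dst k) $ c = 0"
  proof -
    have z: "\<And>d. (Wp pl gam P m ** Gmat pl gam) $ c $ d * dst k $ d = 0"
    proof -
      fix d
      show "(Wp pl gam P m ** Gmat pl gam) $ c $ d * dst k $ d = 0"
      proof (cases "pl d = a")
        case True then show ?thesis using Z Suc.prems unfolding Zc_def by simp
      next
        case False then show ?thesis using D unfolding Dset_def by auto
      qed
    qed
    show ?thesis unfolding matrix_vector_mult_def vec_lambda_beta z by simp
  qed
  ultimately show ?case by simp
qed

lemma Z_iff: "dist_decoupled pl gam P r b a \<longleftrightarrow> Zc pl gam P b a"
proof
  assume Z: "Zc pl gam P b a"
  show "dist_decoupled pl gam P r b a"
    unfolding dist_decoupled_def
  proof (intro allI impI)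
    fix x0 and dst :: "nat \<Rightarrow> _" and k :: nat and c
    assume D: "\<forall>k. dst k \<in> Dset pl a" and c: "pl c = b"
    show "traj_y pl gam P r dst x0 k $ c = traj_x pl gam P r x0 k $ c"
      using Z_imp[of pl gam P b a dst c 0 r x0 k] Z D c by simp
  qed
next
  assume dd: "dist_decoupled pl gam P r b a"
  show "Zc pl gam P b a" unfolding Zc_def
  proof (intro allI impI)
    fix m c d assume c: "pl c = b" and d: "pl d = a"
    define dst where "dst = (\<lambda>t::nat. if t = 0 then axis d (1::real) else 0)"
    have D: "\<forall>k. dst k \<in> Dset pl a" using d by (auto simp: dst_def Dset_def axis_def)
    let ?e = "\<lambda>k. traj_y pl gam P r dst 0 k - traj_x pl gam P r 0 k"
    have e1: "?e (Suc n) = - ((Wp pl gam P n ** Gmat pl gam) *v axis d 1)" for n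
    proof (induction n)
      case 0 then show ?case using err_step[of pl gam P r dst 0 0] by (simp add: dst_def)
    next
      case (Suc n)
      have "?e (Suc (Suc n)) = Wmat pl gam P *v ?e (Suc n)"
        using err_step[of pl gam P r dst 0 "Suc n"] by (simp add: dst_def)
      also have "\<dots> = Wmat pl gam P *v (- ((Wp pl gam P n ** Gmat pl gam) *v axis d 1))"
        using Suc by (rule arg_cong)
      also have "\<dots> = - ((Wp pl gam P (Suc n) ** Gmat pl gam) *v axis d 1)"
        by (simp only: mv_neg matrix_vector_mul_assoc matrix_mul_assoc Wp.simps)
      finally show ?case .
    qed
    have "traj_y pl gam P r dst 0 (Suc m) $ c = traj_x pl gam P r 0 (Suc m) $ c"
      using dd D c unfolding dist_decoupled_def by blast
    then have "?e (Suc m) $ c = 0" by (simp only: vector_minus_component)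
    then have "(- ((Wp pl gam P m ** Gmat pl gam) *v axis d 1)) $ c = 0" by (simp only: e1)
    then have "((Wp pl gam P m ** Gmat pl gam) *v axis d 1) $ c = 0" by (simp only: vector_uminus_component neg_equal_0_iff_equal)
    then show "(Wp pl gam P m ** Gmat pl gam) $ c $ d = 0"
      by (simp add: matrix_vector_mult_basis column_def)
  qed
qed

theorem corollary1:
  fixes pl :: "'c::finite \<Rightarrow> 'p::finite"
    and gam :: "'p \<Rightarrow> real"
    and P :: "real^'c^'c"
    and r :: "real^'c"
    and i j :: 'p
  assumes step_pos: "\<And>l. gam l > 0"
    and P_sym: "\<And>c d. pl c = pl d \<Longrightarrow> P$c$d = P$d$c"
    and potential: "\<And>c d. pl c \<noteq> pl d \<Longrightarrow> P$c$d = P$d$c"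
    and ij: "i \<noteq> j"
  shows "dist_decoupled pl gam P r i j \<longleftrightarrow> dist_decoupled pl gam P r j i"
proof -
  have sym: "\<And>c d. P$c$d = P$d$c" using P_sym potential by blast
  show ?thesis unfolding Z_iff Zc_def using M_sym[OF sym] by metis
qed

end
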